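(* Let $\mathbb{H}$ be a quasiconcave classical entropy and let $\mathcal{N}$ be a classical channel from $X$ ($|X|=m$) to $Y$ with columns $\mathbf{p}_x=\mathcal{N}(\mathbf{e}_x)$. Then its maximal extension satisfies $\overline{\mathbb{H}}(Y|X)_{\mathcal{N}}=\min_{x\in[m]}\mathbb{H}(\mathbf{p}_x)$.
   Context: A classical entropy is a function $\mathbb{H}$ on $\bigcup_{n}\mathrm{Prob}(n)$ that is Schur-concave ($\mathbf{p}\succ\mathbf{q}\Rightarrow\mathbb{H}(\mathbf{p})\le\mathbb{H}(\mathbf{q})$, vectors of different lengths being compared after padding with zeros) and additive ($\mathbb{H}(\mathbf{p}\otimes\mathbf{q})=\mathbb{H}(\mathbf{p})+\mathbb{H}(\mathbf{q})$). It is quasiconcave if $\mathbb{H}(\sum_i\lambda_i\mathbf{p}_i)\ge\min_i\mathbb{H}(\mathbf{p}_i)$ for convex weights $\lambda_i$. Here $\mathbf{p}\succ\mathbf{q}$ means the sum of the $k$ largest entries of $\mathbf{p}$ is at least that of $\mathbf{q}$ for every $k$. Classical channels are column-stochastic matrices; a probability vector is a classical channel with trivial input. Classical channel majorization (same output): $\mathcal{N}\succ\mathcal{M}$ iff $\mathcal{M}=\mathcal{D}^{YZ\to Y}\circ(\mathcal{N}\otimes\mathrm{id}^Z)\circ\mathcal{S}^{X'\to XZ}$ for a finite classical system $Z$ and classical channels $\mathcal{S},\mathcal{D}$ with $\mathcal{D}(\cdot\otimes\mathbf{e}_z)$ doubly stochastic for all $z$; channels with different output sizes are compared after padding outputs of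 the smaller one with zeros. The maximal extension is $\overline{\mathbb{H}}(Y|X)_{\mathcal{N}}:=\inf\{\mathbb{H}(\mathbf{q}):\ \mathcal{N}\succ\mathbf{q}\}$, the infimum over probability vectors $\mathbf{q}$ of arbitrary finite length. *)

theory Defs
  imports Complex_Main
begin

definition prob_vec :: "real list \<Rightarrow> bool" where
  "prob_vec p \<longleftrightarrow> (\<forall>a\<in>set p. 0 \<le> a) \<and> sum_list p = 1"

definition pad :: "nat \<Rightarrow> real list \<Rightarrow> real list" where
  "pad d p = p @ replicate (d - length p) 0"

definition top_sum :: "nat \<Rightarrow> real list \<Rightarrow> real" where
  "top_sum k p = sum_list (take k (rev (sort p)))"

definition majorizes :: "real list \<Rightarrow> real list \<Rightarrow> bool" where
  "majorizes p q \<longleftrightarrow>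
     (let d = max (length p) (length q) in
       \<forall>k. top_sum k (pad d q) \<le> top_sum k (pad d p))"

definition tensor :: "real list \<Rightarrow> real list \<Rightarrow> real list" where
  "tensor p q = concat (map (\<lambda>a. map (\<lambda>b. a * b) q) p)"

definition schur_concave :: "(real list \<Rightarrow> real) \<Rightarrow> bool" where
  "schur_concave H \<longleftrightarrow>
     (\<forall>p q. prob_vec p \<longrightarrow> prob_vec q \<longrightarrow> majorizes p q \<longrightarrow> H p \<le> H q)"

definition additive :: "(real list \<Rightarrow> real) \<Rightarrow> bool" where
  "additive H \<longleftrightarrow>
     (\<forall>p q. prob_vec p \<longrightarrow> prob_vec q \<longrightarrow> H (tensor p q) = H p + H q)"

definition classical_entropy :: "(real list \<Rightarrow> real) \<Rightarrow> bool" where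
  "classical_entropy H \<longleftrightarrow> schur_concave H \<and> additive H"

definition quasiconcave_entropy :: "(real list \<Rightarrow> real) \<Rightarrow> bool" where
  "quasiconcave_entropy H \<longleftrightarrow>
     (\<forall>(k::nat) (n::nat) (ps :: nat \<Rightarrow> real list) (lam :: nat \<Rightarrow> real).
        0 < k \<longrightarrow> (\<forall>i<k. prob_vec (ps i) \<and> length (ps i) = n \<and> 0 \<le> lam i) \<longrightarrow>
        (\<Sum>i<k. lam i) = 1 \<longrightarrow>
        Min ((\<lambda>i. H (ps i)) ` {..<k}) \<le> H (map (\<lambda>j. \<Sum>i<k. lam i * ps i ! j) [0..<n]))"

text \<open>A classical channel from an m-element input to an n-element output is a
  column-stochastic n\<times>m matrix, represented as N y x (output y < n, input x < m).\<close>
definition channel :: "nat \<Rightarrow> nat \<Rightarrow> (nat \<Rightarrow> nat \<Rightarrow> real) \<Rightarrow> bool" where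
  "channel m n N \<longleftrightarrow>
     (\<forall>x<m. (\<forall>y<n. 0 \<le> N y x) \<and> (\<Sum>y<n. N y x) = 1)"

definition column :: "nat \<Rightarrow> (nat \<Rightarrow> nat \<Rightarrow> real) \<Rightarrow> nat \<Rightarrow> real list" where
  "column n N x = map (\<lambda>y. N y x) [0..<n]"

definition doubly_stochastic :: "nat \<Rightarrow> (nat \<Rightarrow> nat \<Rightarrow> real) \<Rightarrow> bool" where
  "doubly_stochastic d D \<longleftrightarrow>
     (\<forall>i<d. \<forall>j<d. 0 \<le> D i j) \<and> (\<forall>j<d. (\<Sum>i<d. D i j) = 1) \<and> (\<forall>i<d. (\<Sum>j<d. D i j) = 1)"

definition pad_chan :: "nat \<Rightarrow> (nat \<Rightarrow> nat \<Rightarrow> real) \<Rightarrow> nat \<Rightarrow> nat \<Rightarrow> real" where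
  "pad_chan n N y x = (if y < n then N y x else 0)"

text \<open>Channel majorization N \<succ> M for N : [m] \<rightarrow> [n], M : [m'] \<rightarrow> [n'] (outputs padded to
  d = max n n'): M = D \<circ> (N \<otimes> id_Z) \<circ> S with Z = [l] (l \<ge> 1), S : [m'] \<rightarrow> [m]\<times>[l]
  a channel (S x z x'), and D(\<cdot> \<otimes> e_z) = D z doubly stochastic for every z.\<close>
definition chan_majorizes ::
  "nat \<Rightarrow> nat \<Rightarrow> (nat \<Rightarrow> nat \<Rightarrow> real) \<Rightarrow> nat \<Rightarrow> nat \<Rightarrow> (nat \<Rightarrow> nat \<Rightarrow> real) \<Rightarrow> bool" where
  "chan_majorizes m n N m' n' M \<longleftrightarrow>
     (let d = max n n' in
       \<exists>(l::nat) (S :: nat \<Rightarrow> nat \<Rightarrow> nat \<Rightarrow> real) (D :: nat \<Rightarrow> nat \<Rightarrow> nat \<Rightarrow> real).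
         0 < l \<and>
         (\<forall>x'<m'. (\<forall>x<m. \<forall>z<l. 0 \<le> S x z x') \<and> (\<Sum>x<m. \<Sum>z<l. S x z x') = 1) \<and>
         (\<forall>z<l. doubly_stochastic d (D z)) \<and>
         (\<forall>y'<d. \<forall>x'<m'.
            pad_chan n' M y' x' =
            (\<Sum>x<m. \<Sum>z<l. \<Sum>y<d. D z y' y * pad_chan n N y x * S x z x')))"

text \<open>A probability vector q viewed as a channel with trivial (one-element) input.\<close>
definition vec_chan :: "real list \<Rightarrow> nat \<Rightarrow> nat \<Rightarrow> real" where
  "vec_chan q y x = q ! y"

definition max_ext :: "(real list \<Rightarrow> real) \<Rightarrow> nat \<Rightarrow> nat \<Rightarrow> (nat \<Rightarrow> nat \<Rightarrow> real) \<Rightarrow> real" where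
  "max_ext H m n N =
     Inf {H q | q. prob_vec q \<and> chan_majorizes m n N 1 (length q) (vec_chan q)}"

end

theory Submission
  imports Defs "HOL-Combinatorics.List_Permutation"
begin


lemma sum_map_upt: "sum_list (map f [0..<d]) = (\<Sum>i<d. f i)"
  by (metis atLeast0LessThan set_upt sum_set_upt_conv_sum_list_nat)

lemma sorted_perm:
  fixes w :: "real list"
  defines "s \<equiv> rev (sort w)"
  shows "\<exists>f. bij_betw f {..<length w} {..<length w} \<and> (\<forall>i<length w. s ! i = w ! (f i))"
    and "\<forall>i j. i \<le> j \<longrightarrow> j < length w \<longrightarrow> s ! j \<le> s ! i"
    and "length s = length w"
proof -
  have "mset s = mset w" by (simp add: s_def)
  from permutation_Ex_bij[OF this] show "\<exists>f. bij_betw f {..<length w} {..<length w} \<and> (\<forall>i<length w. s ! i = w ! (f i))"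
    by (simp add: s_def)
  have "sorted_wrt (\<ge>) s" by (simp add: s_def sorted_wrt_rev)
  then show "\<forall>i j. i \<le> j \<longrightarrow> j < length w \<longrightarrow> s ! j \<le> s ! i"
    by (metis le_neq_implies_less length_rev length_sort order_refl s_def sorted_wrt_nth_less)
  show "length s = length w" by (simp add: s_def)
qed

lemma top_sum_min: "length w = d \<Longrightarrow> top_sum k w = top_sum (min k d) w"
proof (cases "k \<le> d")
  case True then show ?thesis by (simp add: min_def)
next
  case False
  assume "length w = d"
  then have "take k (rev (sort w)) = take d (rev (sort w))" using False by simp
  then show ?thesis using False unfolding top_sum_def by (simp add: min_def)
qed

lemma top_sum_eq: "length w = d \<Longrightarrow> k \<le> d \<Longrightarrow> top_sum k w = (\<Sum>i<k. rev (sort w) ! i)"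
proof -
  assume a: "length w = d" "k \<le> d"
  let ?t = "take k (rev (sort w))"
  have lt: "length ?t = k" using a by simp
  have "top_sum k w = sum_list ?t" by (simp add: top_sum_def)
  also have "\<dots> = (\<Sum>i = 0..<length ?t. ?t ! i)" by (rule sum_list_sum_nth)
  also have "\<dots> = (\<Sum>i<k. ?t ! i)" using lt by (simp add: atLeast0LessThan)
  also have "\<dots> = (\<Sum>i<k. rev (sort w) ! i)" by (intro sum.cong) auto
  finally show ?thesis .
qed

lemma top_sum_subset:
  assumes "length w = d"
  shows "\<exists>I \<subseteq> {..<d}. card I = min k d \<and> top_sum k w = (\<Sum>j\<in>I. w ! j)"
proof -
  obtain f where f: "bij_betw f {..<d} {..<d}" "\<forall>i<d. rev (sort w) ! i = w ! (f i)"
    using sorted_perm(1)[of w] assms by auto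
  let ?k = "min k d"
  have inj: "inj_on f {..<?k}"
    using bij_betw_imp_inj_on[OF f(1)] by (rule inj_on_subset) auto
  have "top_sum k w = top_sum ?k w" by (rule top_sum_min[OF assms])
  also have "\<dots> = (\<Sum>i<?k. rev (sort w) ! i)" by (rule top_sum_eq[OF assms]) simp
  also have "\<dots> = (\<Sum>i<?k. w ! (f i))" using f(2) by (intro sum.cong) auto
  also have "\<dots> = (\<Sum>j\<in>f ` {..<?k}. w ! j)"
    using sum.reindex[OF inj, of "\<lambda>j. w ! j"] by simp
  finally have eq: "top_sum k w = (\<Sum>j\<in>f ` {..<?k}. w ! j)" .
  have sub: "f ` {..<?k} \<subseteq> {..<d}" using bij_betw_imp_surj_on[OF f(1)] by auto
  have "card (f ` {..<?k}) = ?k" using card_image[OF inj] by simp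
  then show ?thesis using eq sub by blast
qed

lemma frac_sorted:
  fixes s b :: "nat \<Rightarrow> real"
  assumes k: "k \<le> d" and desc: "\<forall>i j. i \<le> j \<longrightarrow> j < d \<longrightarrow> s j \<le> s i"
    and b: "\<forall>i<d. 0 \<le> b i \<and> b i \<le> 1" and bs: "(\<Sum>i<d. b i) = real k"
  shows "(\<Sum>i<d. b i * s i) \<le> (\<Sum>i<k. s i)"
proof (cases "k = 0")
  case True
  then have "\<forall>i<d. b i = 0" using b bs sum_nonneg_eq_0_iff[of "{..<d}" b] by auto
  then show ?thesis using True by simp
next
  case False
  define t where "t = s (k - 1)"
  define e where "e i = b i - (if i < k then 1 else 0)" for i
  have le0: "e i * (s i - t) \<le> 0" if "i < d" for i
  proof (cases "i < k")
    case True
    then have "s i \<ge> t" using desc k that False unfolding t_def by auto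
    moreover have "e i \<le> 0" using b that True by (simp add: e_def)
    ultimately show ?thesis by (simp add: mult_nonpos_nonneg)
  next
    case c: False
    then have "s i \<le> t" using desc k that False unfolding t_def by auto
    moreover have "e i \<ge> 0" using b that c by (simp add: e_def)
    ultimately show ?thesis by (simp add: mult_nonneg_nonpos)
  qed
  have ind: "(\<Sum>i<d. (if i < k then 1 else 0::real)) = real k"
  proof -
    have "(\<Sum>i<d. (if i < k then 1 else 0::real)) = real (card ({..<d} \<inter> {i. i < k}))"
      by (simp add: sum.If_cases)
    also have "{..<d} \<inter> {i. i < k} = {..<k}" using k by auto
    finally show ?thesis by simp
  qed
  have es: "(\<Sum>i<d. e i) = 0" using bs ind by (simp add: e_def sum_subtractf)
  have "(\<Sum>i<d. e i * (s i - t)) \<le> 0" by (intro sum_nonpos) (simp add: le0)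
  then have "(\<Sum>i<d. e i * s i) \<le> 0" using es
    by (simp add: right_diff_distrib sum_subtractf sum_distrib_right[symmetric])
  moreover have "(\<Sum>i<d. e i * s i) = (\<Sum>i<d. b i * s i) - (\<Sum>i<d. (if i < k then s i else 0))"
  proof -
    have "(\<Sum>i<d. e i * s i) = (\<Sum>i<d. b i * s i - (if i < k then s i else 0))"
      by (intro sum.cong) (auto simp: e_def algebra_simps)
    then show ?thesis by (simp add: sum_subtractf)
  qed
  moreover have "(\<Sum>i<d. (if i < k then s i else 0)) = (\<Sum>i<k. s i)"
  proof -
    have "(\<Sum>i<d. (if i < k then s i else 0)) = (\<Sum>i\<in>{..<d} \<inter> {i. i < k}. s i)"
      by (simp add: sum.If_cases)
    also have "{..<d} \<inter> {i. i < k} = {..<k}" using k by auto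
    finally show ?thesis by simp
  qed
  ultimately show ?thesis by linarith
qed

lemma frac_bound:
  fixes v :: "real list" and c :: "nat \<Rightarrow> real"
  assumes len: "length v = d" and k: "k \<le> d"
    and c: "\<forall>j<d. 0 \<le> c j \<and> c j \<le> 1" and cs: "(\<Sum>j<d. c j) = real k"
  shows "(\<Sum>j<d. c j * v ! j) \<le> top_sum k v"
proof -
  obtain f where f: "bij_betw f {..<d} {..<d}" "\<forall>i<d. rev (sort v) ! i = v ! (f i)"
    using sorted_perm(1)[of v] len by auto
  have "(\<Sum>j<d. c j * v ! j) = (\<Sum>i<d. c (f i) * v ! (f i))"
    using sum.reindex_bij_betw[OF f(1), of "\<lambda>j. c j * v ! j"] by simp
  also have "\<dots> = (\<Sum>i<d. c (f i) * rev (sort v) ! i)" using f(2) by simp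
  also have "\<dots> \<le> (\<Sum>i<k. rev (sort v) ! i)"
  proof (rule frac_sorted[OF k])
    show "\<forall>i j. i \<le> j \<longrightarrow> j < d \<longrightarrow> rev (sort v) ! j \<le> rev (sort v) ! i"
      using sorted_perm(2)[of v] len by simp
    show "\<forall>i<d. 0 \<le> c (f i) \<and> c (f i) \<le> 1" using c f(1) bij_betwE by blast
    show "(\<Sum>i<d. c (f i)) = real k"
      using sum.reindex_bij_betw[OF f(1), of c] cs by simp
  qed
  also have "\<dots> = top_sum k v" using top_sum_eq[OF len k] by simp
  finally show ?thesis .
qed



lemma pad_id: "length p = d \<Longrightarrow> pad d p = p"
  by (simp add: pad_def)

lemma length_pad: "length p \<le> d \<Longrightarrow> length (pad d p) = d"
  by (simp add: pad_def)

lemma nth_pad: "length p \<le> d \<Longrightarrow> i < d \<Longrightarrow> pad d p ! i = (if i < length p then p ! i else 0)"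
  by (simp add: pad_def nth_append)

lemma prob_vec_pad: "prob_vec p \<Longrightarrow> prob_vec (pad d p)"
  by (auto simp: prob_vec_def pad_def sum_list_replicate)

lemma H_pad:
  assumes "schur_concave H" "prob_vec p" "length p \<le> d"
  shows "H (pad d p) = H p"
proof -
  have m1: "majorizes p (pad d p)" and m2: "majorizes (pad d p) p"
    using assms(3) by (auto simp: majorizes_def length_pad pad_id Let_def)
  show ?thesis using assms(1,2) m1 m2 prob_vec_pad[OF assms(2), of d]
    unfolding schur_concave_def by (meson order_antisym)
qed

lemma ds_majorizes:
  assumes ds: "doubly_stochastic d D" and len: "length v = d"
  shows "majorizes v (map (\<lambda>i. \<Sum>j<d. D i j * v ! j) [0..<d])"
proof -
  let ?w = "map (\<lambda>i. \<Sum>j<d. D i j * v ! j) [0..<d]"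
  have lw: "length ?w = d" by simp
  have "top_sum k ?w \<le> top_sum k v" for k
  proof -
    let ?k = "min k d"
    obtain I where I: "I \<subseteq> {..<d}" "card I = ?k" "top_sum k ?w = (\<Sum>i\<in>I. ?w ! i)"
      using top_sum_subset[OF lw, of k] by blast
    define c where "c j = (\<Sum>i\<in>I. D i j)" for j
    have "(\<Sum>i\<in>I. ?w ! i) = (\<Sum>i\<in>I. \<Sum>j<d. D i j * v ! j)"
      using I(1) by (intro sum.cong) auto
    also have "\<dots> = (\<Sum>j<d. c j * v ! j)"
      unfolding c_def by (subst sum.swap) (simp add: sum_distrib_right)
    also have "\<dots> \<le> top_sum ?k v"
    proof (rule frac_bound[OF len])
      show "?k \<le> d" by simp
      show "\<forall>j<d. 0 \<le> c j \<and> c j \<le> 1"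
      proof (intro allI impI conjI)
        fix j assume j: "j < d"
        show "0 \<le> c j" unfolding c_def using ds I(1) j
          by (intro sum_nonneg) (auto simp: doubly_stochastic_def)
        have "c j \<le> (\<Sum>i<d. D i j)" unfolding c_def using ds I(1) j
          by (intro sum_mono2) (auto simp: doubly_stochastic_def)
        also have "\<dots> = 1" using ds j by (simp add: doubly_stochastic_def)
        finally show "c j \<le> 1" .
      qed
      have "(\<Sum>j<d. c j) = (\<Sum>i\<in>I. \<Sum>j<d. D i j)" unfolding c_def by (rule sum.swap)
      also have "\<dots> = (\<Sum>i\<in>I. 1)" using ds I(1)
        by (intro sum.cong) (auto simp: doubly_stochastic_def)
      finally show "(\<Sum>j<d. c j) = real ?k" using I(2) by simp
    qed
    also have "\<dots> = top_sum k v" using top_sum_min[OF len, of k] by simp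
    finally show ?thesis using I(3) by simp
  qed
  moreover have mx: "max (length v) (length ?w) = d" using len by simp
  ultimately have "\<forall>k. top_sum k (pad d ?w) \<le> top_sum k (pad d v)"
    by (simp only: pad_id[OF len] pad_id[OF lw]) blast
  then show ?thesis unfolding majorizes_def Let_def mx .
qed

lemma sum_div_mod:
  fixes g :: "nat \<Rightarrow> nat \<Rightarrow> real"
  assumes "0 < l"
  shows "(\<Sum>i<m*l. g (i div l) (i mod l)) = (\<Sum>x<m. \<Sum>z<l. g x z)"
proof (induction m)
  case 0 then show ?case by simp
next
  case (Suc m)
  have "{..<Suc m * l} = {..<m*l} \<union> {m*l..<m*l+l}" by auto
  then have "(\<Sum>i<Suc m*l. g (i div l) (i mod l)) = (\<Sum>i<m*l. g (i div l) (i mod l)) + (\<Sum>i\<in>{m*l..<m*l+l}. g (i div l) (i mod l))"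
    by (simp add: sum.union_disjoint ivl_disj_int)
  also have "(\<Sum>i\<in>{m*l..<m*l+l}. g (i div l) (i mod l)) = (\<Sum>z<l. g m z)"
  proof -
    have "(\<Sum>i\<in>{m*l..<m*l+l}. g (i div l) (i mod l)) = (\<Sum>z<l. g ((z + m*l) div l) ((z + m*l) mod l))"
      using sum.shift_bounds_nat_ivl[of "\<lambda>i. g (i div l) (i mod l)" 0 "m*l" l]
      by (simp add: atLeast0LessThan add.commute)
    also have "\<dots> = (\<Sum>z<l. g m z)" using assms by (intro sum.cong) auto
    finally show ?thesis .
  qed
  finally show ?case by (simp only: Suc.IH sum.lessThan_Suc)
qed



lemma ds_prob_vec:
  assumes ds: "doubly_stochastic d D" and pv: "prob_vec v" and len: "length v = d"
  shows "prob_vec (map (\<lambda>i. \<Sum>j<d. D i j * v ! j) [0..<d])"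
proof -
  have vnn: "\<forall>j<d. 0 \<le> v ! j" using pv len by (auto simp: prob_vec_def)
  have "\<forall>a\<in>set (map (\<lambda>i. \<Sum>j<d. D i j * v ! j) [0..<d]). 0 \<le> a"
    using ds vnn by (auto simp: doubly_stochastic_def intro!: sum_nonneg mult_nonneg_nonneg)
  moreover have "sum_list (map (\<lambda>i. \<Sum>j<d. D i j * v ! j) [0..<d]) = 1"
  proof -
    have "sum_list (map (\<lambda>i. \<Sum>j<d. D i j * v ! j) [0..<d]) = (\<Sum>i<d. \<Sum>j<d. D i j * v ! j)"
      by (rule sum_map_upt)
    also have "\<dots> = (\<Sum>j<d. \<Sum>i<d. D i j * v ! j)" by (rule sum.swap)
    also have "\<dots> = (\<Sum>j<d. (\<Sum>i<d. D i j) * v ! j)" by (simp add: sum_distrib_right)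
    also have "\<dots> = (\<Sum>j<d. v ! j)" using ds by (intro sum.cong) (auto simp: doubly_stochastic_def)
    also have "\<dots> = sum_list v" using len by (simp add: sum_list_sum_nth atLeast0LessThan)
    also have "\<dots> = 1" using pv by (simp add: prob_vec_def)
    finally show ?thesis .
  qed
  ultimately show ?thesis by (simp add: prob_vec_def)
qed

lemma if10_mult: "(if P then 1 else 0) * (c::real) = (if P then c else 0)"
  by simp

lemma sum_lt1: "(\<Sum>z<(1::nat). f z) = (f 0 :: real)"
  by (simp add: lessThan_Suc)

theorem theorem19:
  fixes H :: "real list \<Rightarrow> real" and m n :: nat and N :: "nat \<Rightarrow> nat \<Rightarrow> real"
  assumes "classical_entropy H"
    and "quasiconcave_entropy H"
    and "0 < m"
    and "channel m n N"
  shows "max_ext H m n N = Min ((\<lambda>x. H (column n N x)) ` {..<m})"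
proof -
  have sc: "schur_concave H" using assms(1) by (simp add: classical_entropy_def)
  define \<mu> where "\<mu> = Min ((\<lambda>x. H (column n N x)) ` {..<m})"
  have col_pv: "prob_vec (column n N x)" if "x < m" for x
    using assms(4) that by (auto simp: prob_vec_def column_def channel_def sum_map_upt)
  have len_col: "length (column n N x) = n" for x by (simp add: column_def)
  have fin: "finite ((\<lambda>x. H (column n N x)) ` {..<m})" by simp
  have ne: "(\<lambda>x. H (column n N x)) ` {..<m} \<noteq> {}" using assms(3) by auto
  have mu_le: "\<mu> \<le> H (column n N x)" if "x < m" for x
    unfolding \<mu>_def using fin that by (intro Min_le) auto
  obtain x0 where x0: "x0 < m" "\<mu> = H (column n N x0)"
    using Min_in[OF fin ne] unfolding \<mu>_def by auto
  have mem: "chan_majorizes m n N 1 (length (column n N x0)) (vec_chan (column n N x0))"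
    unfolding chan_majorizes_def Let_def len_col max.idem
  proof (rule exI[of _ "1::nat"], rule exI[of _ "\<lambda>(x::nat) (z::nat) (x'::nat). if x = x0 then 1 else (0::real)"],
      rule exI[of _ "\<lambda>(z::nat) (i::nat) (j::nat). if i = j then 1 else (0::real)"], intro conjI allI impI)
    let ?S = "\<lambda>(x::nat) (z::nat) (x'::nat). if x = x0 then 1 else (0::real)"
    let ?D = "\<lambda>(z::nat) (i::nat) (j::nat). if i = j then 1 else (0::real)"
    show "(0::nat) < 1" by simp
    show "\<And>x' x z::nat. x' < 1 \<Longrightarrow> x < m \<Longrightarrow> z < 1 \<Longrightarrow> 0 \<le> ?S x z x'" by simp
    show "\<And>x'::nat. x' < 1 \<Longrightarrow> (\<Sum>x<m. \<Sum>z<(1::nat). ?S x z x') = 1" using x0(1) by (simp add: lessThan_Suc)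
    show "\<And>z::nat. z < 1 \<Longrightarrow> doubly_stochastic n (?D z)"
      by (simp add: doubly_stochastic_def)
    fix y' x' :: nat assume y': "y' < n" and x': "x' < 1"
    have "(\<Sum>x<m. \<Sum>z<(1::nat). \<Sum>y<n. ?D z y' y * pad_chan n N y x * ?S x z x')
        = (\<Sum>x<m. if x = x0 then (\<Sum>y<n. ?D 0 y' y * pad_chan n N y x) else 0)"
      by (intro sum.cong) (auto simp: sum_distrib_right)
    also have "\<dots> = (\<Sum>y<n. ?D 0 y' y * pad_chan n N y x0)" using x0(1) by simp
    also have "\<dots> = N y' x0" using y' by (simp add: pad_chan_def if10_mult)
    finally show "pad_chan n (vec_chan (column n N x0)) y' x' =
      (\<Sum>x<m. \<Sum>z<(1::nat). \<Sum>y<n. ?D z y' y * pad_chan n N y x * ?S x z x')"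
      using y' by (simp add: pad_chan_def vec_chan_def column_def)
  qed
  have lower: "\<mu> \<le> H q" if q: "prob_vec q" "chan_majorizes m n N 1 (length q) (vec_chan q)" for q
  proof -
    define d where "d = max n (length q)"
    obtain l :: nat and S :: "nat \<Rightarrow> nat \<Rightarrow> nat \<Rightarrow> real" and D :: "nat \<Rightarrow> nat \<Rightarrow> nat \<Rightarrow> real" where
      l: "0 < l" and
      S: "\<forall>x'<1. (\<forall>x<m. \<forall>z<l. 0 \<le> S x z x') \<and> (\<Sum>x<m. \<Sum>z<l. S x z x') = 1" and
      D: "\<forall>z<l. doubly_stochastic d (D z)" and
      eq: "\<forall>y'<d. \<forall>x'<1. pad_chan (length q) (vec_chan q) y' x' =
            (\<Sum>x<m. \<Sum>z<l. \<Sum>y<d. D z y' y * pad_chan n N y x * S x z x')"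
      using q(2) unfolding chan_majorizes_def Let_def d_def[symmetric] by blast
    have nd: "n \<le> d" and qd: "length q \<le> d" by (auto simp: d_def)
    define vx where "vx x = pad d (column n N x)" for x
    have vx_len: "length (vx x) = d" for x using nd by (simp add: vx_def length_pad len_col)
    have vx_nth: "vx x ! j = pad_chan n N j x" if "j < d" for x j
      using nd that by (simp add: vx_def nth_pad len_col pad_chan_def column_def)
    have vx_pv: "prob_vec (vx x)" if "x < m" for x
      using col_pv[OF that] by (simp add: vx_def prob_vec_pad)
    have vx_H: "H (vx x) = H (column n N x)" if "x < m" for x
      unfolding vx_def using H_pad[OF sc col_pv[OF that]] nd len_col by simp
    define ps where "ps i = map (\<lambda>i'. \<Sum>j<d. D (i mod l) i' j * vx (i div l) ! j) [0..<d]" for i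
    define lam where "lam i = S (i div l) (i mod l) 0" for i
    have idx: "i div l < m" "i mod l < l" if "i < m * l" for i
      using that l by (auto simp: less_mult_imp_div_less mult.commute)
    have ps_pv: "prob_vec (ps i)" if "i < m * l" for i
      unfolding ps_def using ds_prob_vec[OF _ vx_pv vx_len] D idx[OF that] by blast
    have ps_H: "\<mu> \<le> H (ps i)" if "i < m * l" for i
    proof -
      have "majorizes (vx (i div l)) (ps i)"
        unfolding ps_def using ds_majorizes[OF _ vx_len] D idx[OF that] by blast
      then have "H (vx (i div l)) \<le> H (ps i)"
        using sc vx_pv[OF idx(1)[OF that]] ps_pv[OF that] unfolding schur_concave_def by blast
      then show ?thesis using vx_H[OF idx(1)[OF that]] mu_le[OF idx(1)[OF that]] by simp
    qed
    have lam_sum: "(\<Sum>i<m*l. lam i) = 1"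
      unfolding lam_def using sum_div_mod[OF l, where g="\<lambda>x z. S x z 0" and m=m] S by simp
    have kpos: "0 < m * l" using assms(3) l by simp
    have qc: "Min ((\<lambda>i. H (ps i)) ` {..<m*l}) \<le> H (map (\<lambda>j. \<Sum>i<m*l. lam i * ps i ! j) [0..<d])"
    proof -
      have "\<forall>i<m*l. prob_vec (ps i) \<and> length (ps i) = d \<and> 0 \<le> lam i"
        using ps_pv S idx by (simp add: ps_def lam_def)
      then show ?thesis using assms(2) kpos lam_sum unfolding quasiconcave_entropy_def by blast
    qed
    have mix: "map (\<lambda>j. \<Sum>i<m*l. lam i * ps i ! j) [0..<d] = pad d q"
    proof (rule nth_equalityI)
      show "length (map (\<lambda>j. \<Sum>i<m*l. lam i * ps i ! j) [0..<d]) = length (pad d q)"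
        using qd by (simp add: length_pad)
      fix j assume "j < length (map (\<lambda>j. \<Sum>i<m*l. lam i * ps i ! j) [0..<d])"
      then have j: "j < d" by simp
      have "(\<Sum>i<m*l. lam i * ps i ! j) = (\<Sum>i<m*l. S (i div l) (i mod l) 0 *
              (\<Sum>y<d. D (i mod l) j y * vx (i div l) ! y))"
        using j by (simp add: ps_def lam_def)
      also have "\<dots> = (\<Sum>x<m. \<Sum>z<l. S x z 0 * (\<Sum>y<d. D z j y * vx x ! y))"
        by (rule sum_div_mod[OF l])
      also have "\<dots> = (\<Sum>x<m. \<Sum>z<l. \<Sum>y<d. D z j y * pad_chan n N y x * S x z 0)"
        by (intro sum.cong refl) (simp add: sum_distrib_left vx_nth mult.commute mult.left_commute)
      also have "\<dots> = pad_chan (length q) (vec_chan q) j 0" using eq j by simp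
      also have "\<dots> = pad d q ! j" using j qd by (simp add: pad_chan_def vec_chan_def nth_pad)
      finally show "map (\<lambda>j. \<Sum>i<m*l. lam i * ps i ! j) [0..<d] ! j = pad d q ! j" using j by simp
    qed
    have "\<mu> \<le> Min ((\<lambda>i. H (ps i)) ` {..<m*l})"
    proof (rule Min.boundedI)
      show "finite ((\<lambda>i. H (ps i)) ` {..<m*l})" by simp
      have "0 \<in> {..<m*l}" using kpos by simp
      then show "(\<lambda>i. H (ps i)) ` {..<m*l} \<noteq> {}" by blast
      show "\<And>a. a \<in> (\<lambda>i. H (ps i)) ` {..<m*l} \<Longrightarrow> \<mu> \<le> a" using ps_H by auto
    qed
    also have "\<dots> \<le> H (pad d q)" using qc mix by simp
    also have "\<dots> = H q" using H_pad[OF sc q(1) qd] .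
    finally show ?thesis .
  qed
  have "Inf {H q | q. prob_vec q \<and> chan_majorizes m n N 1 (length q) (vec_chan q)} = \<mu>"
  proof (rule cInf_eq_minimum)
    show "\<mu> \<in> {H q | q. prob_vec q \<and> chan_majorizes m n N 1 (length q) (vec_chan q)}"
      using x0 mem col_pv by blast
    show "\<And>x. x \<in> {H q | q. prob_vec q \<and> chan_majorizes m n N 1 (length q) (vec_chan q)} \<Longrightarrow> \<mu> \<le> x"
      using lower by blast
  qed
  then show ?thesis unfolding max_ext_def \<mu>_def .
qed

end
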